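(* Let $\theta\in(0,\pi)$, $\lambda_0=2\cos\theta$, $\sigma\in[0,1]$, $c_0\ge1$, and let $(\omega_i)_{i\ge1}$ be real numbers with $|\omega_i|\le c_0$ for all $i$. Then for all $k\ge0$, $$\frac{|X_{k+1}-X_k|}{Y_k}\le \frac{\sqrt5}{2}\,\frac{\sigma c_0^2}{\sin^2\theta}.$$
   Context: Let $z=e^{i\theta}$, $T_i=\begin{pmatrix}\lambda_0-\sigma\omega_i&-1\\1&0\end{pmatrix}$, $W_k=T_k\cdots T_1$ ($W_0=I$), and define $X_k,Y_k\in\mathbb{R}$, $Y_k>0$, by $X_k+iY_k=W_k^{-1}\circ z$, where a real $2\times2$ matrix $\begin{pmatrix}a&b\\c&d\end{pmatrix}$ of positive determinant acts on the upper half plane by $w\mapsto\frac{aw+b}{cw+d}$. *)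

theory Defs
  imports "HOL-Analysis.Analysis"
begin

definition Tmat :: "real \<Rightarrow> real \<Rightarrow> (nat \<Rightarrow> real) \<Rightarrow> nat \<Rightarrow> real^2^2" where
  "Tmat \<theta> \<sigma> \<omega> i = (\<chi> r c. if r = 1 then (if c = 1 then 2 * cos \<theta> - \<sigma> * \<omega> i else -1)
                              else (if c = 1 then 1 else 0))"

fun Wmat :: "real \<Rightarrow> real \<Rightarrow> (nat \<Rightarrow> real) \<Rightarrow> nat \<Rightarrow> real^2^2" where
  "Wmat \<theta> \<sigma> \<omega> 0 = mat 1"
| "Wmat \<theta> \<sigma> \<omega> (Suc k) = Tmat \<theta> \<sigma> \<omega> (Suc k) ** Wmat \<theta> \<sigma> \<omega> k"

definition mobius :: "real^2^2 \<Rightarrow> complex \<Rightarrow> complex" where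
  "mobius A w = (of_real (A$1$1) * w + of_real (A$1$2)) / (of_real (A$2$1) * w + of_real (A$2$2))"

definition Zpt :: "real \<Rightarrow> real \<Rightarrow> (nat \<Rightarrow> real) \<Rightarrow> nat \<Rightarrow> complex" where
  "Zpt \<theta> \<sigma> \<omega> k = mobius (matrix_inv (Wmat \<theta> \<sigma> \<omega> k)) (cis \<theta>)"

definition Xk :: "real \<Rightarrow> real \<Rightarrow> (nat \<Rightarrow> real) \<Rightarrow> nat \<Rightarrow> real" where
  "Xk \<theta> \<sigma> \<omega> k = Re (Zpt \<theta> \<sigma> \<omega> k)"

definition Yk :: "real \<Rightarrow> real \<Rightarrow> (nat \<Rightarrow> real) \<Rightarrow> nat \<Rightarrow> real" where
  "Yk \<theta> \<sigma> \<omega> k = Im (Zpt \<theta> \<sigma> \<omega> k)"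

end

theory Submission
  imports Defs
begin

lemma minv_eq:
  fixes A B :: "real^2^2"
  assumes "A ** B = mat 1" "B ** A = mat 1"
  shows "matrix_inv A = B"
proof -
  have "\<exists>A'. A ** A' = mat 1 \<and> A' ** A = mat 1" using assms by blast
  then have h: "A ** matrix_inv A = mat 1 \<and> matrix_inv A ** A = mat 1"
    unfolding matrix_inv_def by (rule someI_ex)
  have "matrix_inv A = matrix_inv A ** (A ** B)" using assms by (simp add: matrix_mul_rid)
  also have "\<dots> = (matrix_inv A ** A) ** B" by (simp add: matrix_mul_assoc)
  also have "\<dots> = B" using h by (simp add: matrix_mul_lid)
  finally show ?thesis .
qed

lemma mat2_eq: "(A::real^2^2) = B \<longleftrightarrow> A$1$1 = B$1$1 \<and> A$1$2 = B$1$2 \<and> A$2$1 = B$2$1 \<and> A$2$2 = B$2$2"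
  by (auto simp: vec_eq_iff forall_2)

lemma mmul2: "((A::real^2^2) ** B)$i$j = A$i$1 * B$1$j + A$i$2 * B$2$j"
  by (simp add: matrix_matrix_mult_def sum_2)

lemma inv2:
  fixes A :: "real^2^2"
  assumes "A$1$1 * A$2$2 - A$1$2 * A$2$1 = 1"
  shows "matrix_inv A = (\<chi> i j. if i = 1 then (if j = 1 then A$2$2 else - A$1$2)
                              else (if j = 1 then - A$2$1 else A$1$1))"
  apply (rule minv_eq)
  using assms by (auto simp: mat2_eq mmul2 mat_def algebra_simps)

lemma T_entries: "Tmat t s w i $1$1 = 2 * cos t - s * w i" "Tmat t s w i $1$2 = -1"
   "Tmat t s w i $2$1 = 1" "Tmat t s w i $2$2 = 0"
  by (simp_all add: Tmat_def)

lemma W_det: "Wmat t s w k $1$1 * Wmat t s w k $2$2 - Wmat t s w k $1$2 * Wmat t s w k $2$1 = 1"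
  by (induction k) (auto simp: mat_def mmul2 T_entries algebra_simps)


definition G :: "real \<Rightarrow> real \<Rightarrow> real \<Rightarrow> real \<Rightarrow> complex \<Rightarrow> complex" where
  "G a b c d v = (of_real d * v - of_real b) / (of_real a - of_real c * v)"

lemma G_den: assumes "a*d - b*c = 1" "Im v > 0" shows "of_real a - of_real c * v \<noteq> 0"
proof
  assume h: "of_real a - of_real c * v = 0"
  then have "c * Im v = 0" "a - c * Re v = 0" by (auto simp: complex_eq_iff)
  then have "c = 0" "a = 0" using assms(2) by auto
  then show False using assms(1) by simp
qed

lemma G_im: assumes "a*d - b*c = 1" "Im v > 0"
  shows "Im (G a b c d v) = Im v / (cmod (of_real a - of_real c * v))^2"
proof -
  have n: "(cmod (of_real a - of_real c * v))^2 = (a - c * Re v)^2 + (c * Im v)^2"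
    by (simp add: cmod_power2)
  have "Im (G a b c d v) = Im v * (a*d - b*c) / ((a - c * Re v)^2 + (c * Im v)^2)"
    unfolding G_def by (simp add: Im_divide algebra_simps power2_eq_square)
  then have "Im (G a b c d v) = Im v * (a*d - b*c) / (cmod (of_real a - of_real c * v))^2"
    using n by simp
  then show ?thesis using assms by simp
qed

lemma G_diff: assumes "a*d - b*c = 1" "Im v > 0" "Im u > 0"
  shows "G a b c d u - G a b c d v = (u - v) / ((of_real a - of_real c * u) * (of_real a - of_real c * v))"
proof -
  have du: "of_real a - of_real c * u \<noteq> 0" and dv: "of_real a - of_real c * v \<noteq> 0"
    using G_den assms by blast+
  have e: "(of_real a * of_real d - of_real b * of_real c :: complex) = 1"
    using assms(1) by (metis of_real_1 of_real_diff of_real_mult)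
  have "G a b c d u - G a b c d v =
     ((of_real d * u - of_real b) * (of_real a - of_real c * v) - (of_real d * v - of_real b) * (of_real a - of_real c * u))
      / ((of_real a - of_real c * u) * (of_real a - of_real c * v))"
    unfolding G_def using du dv by (simp add: field_simps)
  also have "(of_real d * u - of_real b) * (of_real a - of_real c * v) - (of_real d * v - of_real b) * (of_real a - of_real c * u)
      = (u - v) * (of_real a * of_real d - of_real b * of_real c)" by (simp add: algebra_simps)
  finally show ?thesis using e by simp
qed

definition Qf :: "complex \<Rightarrow> complex \<Rightarrow> real" where
  "Qf p q = (cmod (p - q))^2 / (Im p * Im q)"

lemma Q_inv: assumes "a*d - b*c = 1" "Im v > 0" "Im u > 0"
  shows "Qf (G a b c d u) (G a b c d v) = Qf u v"
proof -
  have du: "cmod (of_real a - of_real c * u) > 0" and dv: "cmod (of_real a - of_real c * v) > 0"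
    using G_den assms by auto
  show ?thesis unfolding Qf_def G_diff[OF assms] G_im[OF assms(1,2)] G_im[OF assms(1,3)]
    using du dv by (simp only: norm_divide norm_mult power_mult_distrib power_divide) (simp add: field_simps)
qed

lemma Q_bound: assumes "Im p > 0" "Im q > 0"
  shows "(Re p - Re q)^2 \<le> (Im q)^2 * (Qf p q + (Qf p q)^2 / 4)"
proof -
  define X where "X = Re p - Re q"
  define Y where "Y = Im q"
  define Y' where "Y' = Im p"
  have Y: "Y > 0" "Y' > 0" using assms by (auto simp: Y_def Y'_def)
  have Q: "Qf p q = (X^2 + (Y' - Y)^2) / (Y' * Y)"
    unfolding Qf_def X_def Y_def Y'_def by (simp add: cmod_power2)
  have key: "0 \<le> (X^2 + Y^2 - Y'^2)^2" by simp
  have "(Im q)^2 * (Qf p q + (Qf p q)^2 / 4) - (Re p - Re q)^2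
      = (X^2 + Y^2 - Y'^2)^2 / (4 * Y'^2)"
    unfolding Q X_def[symmetric] Y_def[symmetric] using Y
    by (simp add: field_simps power2_eq_square)
  also have "\<dots> \<ge> 0" by simp
  finally show ?thesis by simp
qed


lemma w_facts:
  fixes t e :: real
  assumes "0 < t" "t < pi"
  defines "z \<equiv> cis t" and "m \<equiv> 2 * cos t - e"
  shows "of_real m - z \<noteq> 0" "Im (1 / (of_real m - z)) > 0"
    "Qf (1 / (of_real m - z)) z = e^2 / (sin t)^2"
proof -
  have s: "sin t > 0" using assms sin_gt_zero by blast
  have imz: "Im z = sin t" "Re z = cos t" by (simp_all add: z_def)
  show nz: "of_real m - z \<noteq> 0" using s imz by (auto simp: complex_eq_iff)
  define N where "N = (cmod (of_real m - z))^2"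
  have N: "N > 0" using nz by (simp add: N_def)
  have imw: "Im (1 / (of_real m - z)) = sin t / N"
    by (simp add: Im_divide N_def cmod_power2 imz)
  then show "Im (1 / (of_real m - z)) > 0" using s N by simp
  have zz: "z * z + 1 = 2 * of_real (cos t) * z"
    unfolding z_def by (simp add: complex_eq_iff cis.ctr power2_eq_square algebra_simps cos_double sin_double)
  have "1 / (of_real m - z) - z = (1 - z * (of_real m - z)) / (of_real m - z)"
    using nz by (simp add: field_simps)
  also have "1 - z * (of_real m - z) = z * of_real e"
    using zz unfolding m_def by (simp add: algebra_simps)
  finally have d: "1 / (of_real m - z) - z = z * of_real e / (of_real m - z)" .
  have "(cmod (1 / (of_real m - z) - z))^2 = e^2 / N"
    unfolding d N_def by (simp add: norm_divide norm_mult z_def power_divide)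
  then show "Qf (1 / (of_real m - z)) z = e^2 / (sin t)^2"
    unfolding Qf_def imw imz using N s by (simp add: field_simps power2_eq_square)
qed


theorem mainTheorem4:
  fixes \<theta> \<sigma> c0 :: real and \<omega> :: "nat \<Rightarrow> real" and k :: nat
  assumes "0 < \<theta>" and "\<theta> < pi"
    and "0 \<le> \<sigma>" and "\<sigma> \<le> 1"
    and "1 \<le> c0"
    and "\<forall>i\<ge>1. \<bar>\<omega> i\<bar> \<le> c0"
  shows "\<bar>Xk \<theta> \<sigma> \<omega> (Suc k) - Xk \<theta> \<sigma> \<omega> k\<bar> / Yk \<theta> \<sigma> \<omega> k
           \<le> sqrt 5 / 2 * (\<sigma> * c0 ^ 2 / (sin \<theta>) ^ 2)"
proof -
  define W where "W = Wmat \<theta> \<sigma> \<omega> k"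
  define a where "a = W$1$1"
  define b where "b = W$1$2"
  define c where "c = W$2$1"
  define d where "d = W$2$2"
  define e where "e = \<sigma> * \<omega> (Suc k)"
  define m where "m = 2 * cos \<theta> - e"
  define z where "z = cis \<theta>"
  define w where "w = 1 / (of_real m - z)"
  have det: "a*d - b*c = 1" unfolding a_def b_def c_def d_def W_def by (rule W_det)
  have s: "sin \<theta> > 0" using assms sin_gt_zero by blast
  have imz: "Im z > 0" using s by (simp add: z_def)
  have wf: "of_real m - z \<noteq> 0" "Im w > 0" "Qf w z = e^2 / (sin \<theta>)^2"
    using w_facts[OF assms(1,2), of e] unfolding w_def z_def m_def by auto
  have Zk: "Zpt \<theta> \<sigma> \<omega> k = G a b c d z"
    unfolding Zpt_def inv2[OF W_det] mobius_def G_def z_def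
    by (simp add: a_def b_def c_def d_def W_def algebra_simps)
  have W1: "Wmat \<theta> \<sigma> \<omega> (Suc k) $1$1 = m * a - c" "Wmat \<theta> \<sigma> \<omega> (Suc k) $1$2 = m * b - d"
     "Wmat \<theta> \<sigma> \<omega> (Suc k) $2$1 = a" "Wmat \<theta> \<sigma> \<omega> (Suc k) $2$2 = b"
    by (simp_all add: mmul2 T_entries a_def b_def c_def d_def W_def m_def e_def)
  have Zk1: "Zpt \<theta> \<sigma> \<omega> (Suc k) = G a b c d w"
  proof -
    have "Zpt \<theta> \<sigma> \<omega> (Suc k) = (of_real b * z - of_real (m * b - d)) / (of_real (m * a - c) - of_real a * z)"
      unfolding Zpt_def inv2[OF W_det] mobius_def z_def W1 by (simp add: algebra_simps)
    also have "\<dots> = ((of_real m - z) * (of_real d * w - of_real b)) / ((of_real m - z) * (of_real a - of_real c * w))"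
    proof -
      have Mw: "(of_real m - z) * w = 1" using wf(1) by (simp add: w_def)
      have "(of_real m - z) * (of_real d * w - of_real b) = of_real d * ((of_real m - z) * w) - (of_real m - z) * of_real b"
        by (simp add: algebra_simps)
      moreover have "(of_real m - z) * (of_real a - of_real c * w) = (of_real m - z) * of_real a - of_real c * ((of_real m - z) * w)"
        by (simp add: algebra_simps)
      ultimately show ?thesis unfolding Mw by (simp add: algebra_simps)
    qed
    also have "\<dots> = G a b c d w"
      unfolding G_def using wf(1) by (rule mult_divide_mult_cancel_left)
    finally show ?thesis .
  qed
  define B where "B = \<sigma> * c0 ^ 2 / (sin \<theta>) ^ 2"
  define Q where "Q = e^2 / (sin \<theta>)^2"
  have Qeq: "Qf (G a b c d w) (G a b c d z) = Q"
    using Q_inv[OF det imz wf(2)] wf(3) Q_def by simp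
  have Y: "Im (G a b c d z) > 0" using G_im[OF det imz] imz G_den[OF det imz] by simp
  have Yw: "Im (G a b c d w) > 0" using G_im[OF det wf(2)] wf(2) G_den[OF det wf(2)] by simp
  have hb: "(Re (G a b c d w) - Re (G a b c d z))^2 \<le> (Im (G a b c d z))^2 * (Q + Q^2/4)"
    using Q_bound[OF Yw Y] Qeq by simp
  have eb: "\<bar>e\<bar> \<le> \<sigma> * c0"
    unfolding e_def using assms(3) assms(6) by (simp add: abs_mult mult_left_mono)
  have s1: "sin \<theta> \<le> 1" by simp
  have Q0: "Q \<ge> 0" unfolding Q_def by simp
  have QB: "Q \<le> B"
  proof -
    have "e^2 \<le> (\<sigma> * c0)^2" using eb by (metis abs_ge_zero power2_abs power_mono)
    also have "\<dots> \<le> \<sigma> * c0^2" proof -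
      have "\<sigma> * c0^2 \<le> c0^2" using assms(3,4) mult_right_le_one_le[of "c0^2" \<sigma>] by (simp add: mult.commute)
      then have "\<sigma> * (\<sigma> * c0^2) \<le> \<sigma> * c0^2" using assms(3) by (rule mult_left_mono)
      then show ?thesis by (simp add: power_mult_distrib power2_eq_square mult.assoc mult.left_commute)
    qed
    finally show ?thesis unfolding Q_def B_def by (simp add: divide_right_mono)
  qed
  have QB2: "Q \<le> B^2"
  proof -
    have "e^2 \<le> (\<sigma> * c0)^2" using eb by (metis abs_ge_zero power2_abs power_mono)
    then have "Q \<le> (\<sigma> * c0)^2 / (sin \<theta>)^2" unfolding Q_def by (simp add: divide_right_mono)
    also have "\<dots> \<le> B^2"
    proof -
      have "(sin \<theta>)^2 \<le> 1" using s s1 by (simp add: power_le_one)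
      have c2: "1 \<le> c0^2" using assms(5) by (simp add: one_le_power)
      have "(\<sigma> * c0)^2 * (sin \<theta>)^2 \<le> (\<sigma> * c0)^2 * c0^2"
        using \<open>(sin \<theta>)^2 \<le> 1\<close> c2 by (intro mult_left_mono) auto
      then show ?thesis unfolding B_def using s
        by (simp add: field_simps power2_eq_square power_mult_distrib)
    qed
    finally show ?thesis .
  qed
  have B0: "B \<ge> 0" unfolding B_def using assms(3) by simp
  have "Q + Q^2/4 \<le> 5/4 * B^2"
  proof -
    have "Q^2 \<le> B^2" using QB Q0 by (simp add: power_mono)
    then show ?thesis using QB2 by simp
  qed
  then have "(Re (G a b c d w) - Re (G a b c d z))^2 \<le> (Im (G a b c d z) * (sqrt 5 / 2 * B))^2"
  proof -
    have "(Im (G a b c d z))^2 * (Q + Q^2/4) \<le> (Im (G a b c d z))^2 * (5/4 * B^2)"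
      using \<open>Q + Q^2/4 \<le> 5/4 * B^2\<close> by (rule mult_left_mono) simp
    also have "\<dots> = (Im (G a b c d z) * (sqrt 5 / 2 * B))^2"
      by (simp add: power_mult_distrib power_divide)
    finally show ?thesis using hb by linarith
  qed
  then have "\<bar>Re (G a b c d w) - Re (G a b c d z)\<bar> \<le> Im (G a b c d z) * (sqrt 5 / 2 * B)"
  proof -
    have "0 \<le> Im (G a b c d z) * (sqrt 5 / 2 * B)" using Y B0 by simp
    with \<open>(Re (G a b c d w) - Re (G a b c d z))^2 \<le> (Im (G a b c d z) * (sqrt 5 / 2 * B))^2\<close>
    show ?thesis by (metis power2_abs power2_le_imp_le)
  qed
  then show ?thesis
    unfolding Xk_def Yk_def Zk Zk1 B_def[symmetric] using Y by (simp add: divide_le_eq mult.commute)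
qed

end
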